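(* Let $p$ be an odd prime, $\xi = e^{2\pi i/p^2}$, and $C$ the $p\times p$ cycle matrix. Let $\mathcal{T}$ be the set of all $2p\times 2p$ block-diagonal matrices of the form \[A = \operatorname{diag}\!\left(DC^k,\ 1,\ \xi^{k+a_1p},\ \xi^{2k+a_2p},\ \dots,\ \xi^{(p-1)k+a_{p-1}p}\right),\] where $D$ ranges over all $p\times p$ unitary diagonal matrices with $\det D=1$, $k\in\{0,1,\dots,p-1\}$, and $a_j\in\{0,1,\dots,p-1\}$ for $j=1,\dots,p-1$. Then $\mathcal{T}$ (a group of unitary $2p\times 2p$ matrices) is $\frac{1}{2p^2}$-argument-submultiplicative.
   Context: The $p\times p$ cycle matrix $C$ has entries $C_{j,j+1}=1$ for $j=1,\dots,p-1$, $C_{p,1}=1$, and all other entries $0$. For a complex number $z\neq 0$, $\arg(z)\in(-\pi,\pi]$ denotes its principal argument; $\sigma(M)$ denotes the spectrum of a matrix $M$. A group $\mathcal{G}$ of unitary $n\times n$ matrices is called $\varepsilon'$-argument-submultiplicative ($\varepsilon'$-ASM) if for every $A,B\in\mathcal{G}$ and every $\gamma\in\sigma(AB)$ there exist $\alpha\in\sigma(A)$ and $\beta\in\sigma(B)$ such that $\frac{1}{2\pi}\left|\arg\left(\frac{\alpha\beta}{\gamma}\right)\right|\le \varepsilon'$. *)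

theory Defs
  imports "HOL-Analysis.Analysis" "Jordan_Normal_Form.Schur_Decomposition"
begin

definition cycle_mat :: "nat \<Rightarrow> complex mat" where
  "cycle_mat p = mat p p (\<lambda>(i,j). if j = (i + 1) mod p then 1 else 0)"

definition diag_of :: "nat \<Rightarrow> (nat \<Rightarrow> complex) \<Rightarrow> complex mat" where
  "diag_of n d = mat n n (\<lambda>(i,j). if i = j then d i else 0)"

definition spectrum_mat :: "complex mat \<Rightarrow> complex set" where
  "spectrum_mat M = {x. eigenvalue M x}"

definition unitary_mat :: "nat \<Rightarrow> complex mat \<Rightarrow> bool" where
  "unitary_mat n U \<longleftrightarrow> U \<in> carrier_mat n n \<and> mat_adjoint U * U = 1\<^sub>m n"

definition is_mat_group :: "nat \<Rightarrow> complex mat set \<Rightarrow> bool" where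
  "is_mat_group n G \<longleftrightarrow> G \<subseteq> carrier_mat n n \<and> 1\<^sub>m n \<in> G \<and>
     (\<forall>A\<in>G. \<forall>B\<in>G. A * B \<in> G) \<and> (\<forall>A\<in>G. \<exists>B\<in>G. A * B = 1\<^sub>m n \<and> B * A = 1\<^sub>m n)"

definition eps_ASM :: "real \<Rightarrow> complex mat set \<Rightarrow> bool" where
  "eps_ASM eps G \<longleftrightarrow> (\<forall>A\<in>G. \<forall>B\<in>G. \<forall>\<gamma>\<in>spectrum_mat (A * B).
      \<exists>\<alpha>\<in>spectrum_mat A. \<exists>\<beta>\<in>spectrum_mat B. \<bar>Arg (\<alpha> * \<beta> / \<gamma>)\<bar> / (2 * pi) \<le> eps)"

definition T_elem :: "nat \<Rightarrow> (nat \<Rightarrow> complex) \<Rightarrow> nat \<Rightarrow> (nat \<Rightarrow> nat) \<Rightarrow> complex mat" where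
  "T_elem p d k a = (let \<xi> = exp (2 * pi * \<i> / of_nat (p^2)) in
     four_block_mat (diag_of p d * cycle_mat p ^\<^sub>m k) (0\<^sub>m p p) (0\<^sub>m p p)
       (diag_of p (\<lambda>j. if j = 0 then 1 else \<xi> ^ (j * k + a j * p))))"

definition T_set :: "nat \<Rightarrow> complex mat set" where
  "T_set p = {T_elem p d k a | d k a.
      (\<forall>i<p. cmod (d i) = 1) \<and> det (diag_of p d) = 1 \<and> k < p \<and> (\<forall>j\<in>{1..p-1}. a j < p)}"

end

theory Submission
  imports Defs
begin

no_notation Finite_Cartesian_Product.vec_nth (infixl "$" 90)


definition GP :: "nat \<Rightarrow> (nat \<Rightarrow> complex) \<Rightarrow> (nat \<Rightarrow> nat) \<Rightarrow> complex mat" where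
  "GP n c \<pi> = mat n n (\<lambda>(i,j). if j = \<pi> i then c i else 0)"

lemma GP_carrier[simp]: "GP n c \<pi> \<in> carrier_mat n n" "dim_row (GP n c \<pi>) = n" "dim_col (GP n c \<pi>) = n"
  by (auto simp: GP_def)

lemma GP_index[simp]: "i < n \<Longrightarrow> j < n \<Longrightarrow> GP n c \<pi> $$ (i,j) = (if j = \<pi> i then c i else 0)"
  by (simp add: GP_def)

lemma sum_single: "finite A \<Longrightarrow> a \<in> A \<Longrightarrow> (\<Sum>l\<in>A. if l = a then f l else (0::'b::comm_monoid_add)) = f a"
  by (simp add: sum.delta')

lemma GP_mult:
  assumes "\<forall>i<n. \<pi> i < n"
  shows "GP n c \<pi> * GP n c' \<pi>' = GP n (\<lambda>i. c i * c' (\<pi> i)) (\<lambda>i. \<pi>' (\<pi> i))"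
proof (rule eq_matI)
  fix i j assume ij: "i < dim_row (GP n (\<lambda>i. c i * c' (\<pi> i)) (\<lambda>i. \<pi>' (\<pi> i)))" "j < dim_col (GP n (\<lambda>i. c i * c' (\<pi> i)) (\<lambda>i. \<pi>' (\<pi> i)))"
  hence i: "i < n" and j: "j < n" by auto
  have "(GP n c \<pi> * GP n c' \<pi>') $$ (i,j) = (\<Sum>l<n. GP n c \<pi> $$ (i,l) * GP n c' \<pi>' $$ (l,j))"
    using i j by (simp add: scalar_prod_def lessThan_atLeast0)
  also have "\<dots> = (\<Sum>l<n. if l = \<pi> i then c i * (if j = \<pi>' l then c' l else 0) else 0)"
    using i j by (intro sum.cong) auto
  also have "\<dots> = c i * (if j = \<pi>' (\<pi> i) then c' (\<pi> i) else 0)"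
    by (subst sum_single) (use assms i in auto)
  finally show "(GP n c \<pi> * GP n c' \<pi>') $$ (i,j) = GP n (\<lambda>i. c i * c' (\<pi> i)) (\<lambda>i. \<pi>' (\<pi> i)) $$ (i,j)"
    using i j by simp
qed auto

lemma GP_mult_vec:
  assumes "\<pi> i < n" "i < n" "v \<in> carrier_vec n"
  shows "(GP n c \<pi> *\<^sub>v v) $ i = c i * v $ (\<pi> i)"
proof -
  have "(GP n c \<pi> *\<^sub>v v) $ i = (\<Sum>l<n. GP n c \<pi> $$ (i,l) * v $ l)"
    using assms by (simp add: scalar_prod_def lessThan_atLeast0)
  also have "\<dots> = (\<Sum>l<n. if l = \<pi> i then c i * v $ l else 0)"
    by (rule sum.cong) (use assms in auto)
  also have "\<dots> = c i * v $ (\<pi> i)" by (subst sum_single) (use assms in auto)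
  finally show ?thesis .
qed

lemma GP_eq: "(\<And>i. i < n \<Longrightarrow> c i = c' i \<and> \<pi> i = \<pi>' i) \<Longrightarrow> GP n c \<pi> = GP n c' \<pi>'"
  by (rule eq_matI) auto

lemma one_GP: "1\<^sub>m n = GP n (\<lambda>_. 1) id"
  by (rule eq_matI) auto

lemma diag_dims[simp]: "dim_row (diag_of n d) = n" "dim_col (diag_of n d) = n" "diag_of n d \<in> carrier_mat n n"
  by (auto simp: diag_of_def)

lemma diag_GP: "diag_of n d = GP n d id"
  by (rule eq_matI) (auto simp: diag_of_def)

lemma cycle_GP: "cycle_mat p = GP p (\<lambda>_. 1) (\<lambda>i. (i+1) mod p)"
  by (rule eq_matI) (auto simp: cycle_mat_def)

lemma cycle_pow: "cycle_mat p ^\<^sub>m k = GP p (\<lambda>_. 1) (\<lambda>i. (i+k) mod p)"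
proof (induction k)
  case 0 thus ?case by (auto simp: one_GP cycle_mat_def intro!: GP_eq)
next
  case (Suc k)
  have "cycle_mat p ^\<^sub>m Suc k = GP p (\<lambda>_. 1) (\<lambda>i. (i+k) mod p) * GP p (\<lambda>_. 1) (\<lambda>i. (i+1) mod p)"
    by (subst pow_mat.simps(2), subst Suc.IH, simp add: cycle_GP)
  also have "\<dots> = GP p (\<lambda>_. 1) (\<lambda>i. (i+Suc k) mod p)"
    by (subst GP_mult) (auto intro!: GP_eq simp: mod_Suc_eq)
  finally show ?case .
qed

definition xi :: "nat \<Rightarrow> complex" where "xi p = exp (2 * pi * \<i> / of_nat (p^2))"
definition eT :: "nat \<Rightarrow> nat \<Rightarrow> (nat \<Rightarrow> nat) \<Rightarrow> nat \<Rightarrow> complex" where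
  "eT p k a j = (if j = 0 then 1 else xi p ^ (j * k + a j * p))"
definition cT :: "nat \<Rightarrow> (nat \<Rightarrow> complex) \<Rightarrow> nat \<Rightarrow> (nat \<Rightarrow> nat) \<Rightarrow> nat \<Rightarrow> complex" where
  "cT p d k a i = (if i < p then d i else eT p k a (i - p))"
definition piT :: "nat \<Rightarrow> nat \<Rightarrow> nat \<Rightarrow> nat" where
  "piT p k i = (if i < p then (i + k) mod p else i)"

lemma DC_GP: "diag_of p d * cycle_mat p ^\<^sub>m k = GP p d (\<lambda>i. (i+k) mod p)"
  unfolding diag_GP cycle_pow by (subst GP_mult) auto

lemma T_GP: "T_elem p d k a = GP (2*p) (cT p d k a) (piT p k)"
proof (rule eq_matI)
  fix i j assume "i < dim_row (GP (2*p) (cT p d k a) (piT p k))" "j < dim_col (GP (2*p) (cT p d k a) (piT p k))"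
  hence i: "i < 2*p" and j: "j < 2*p" by auto
  show "T_elem p d k a $$ (i,j) = GP (2*p) (cT p d k a) (piT p k) $$ (i,j)"
  proof -
    have e: "T_elem p d k a = four_block_mat (GP p d (\<lambda>i. (i+k) mod p)) (0\<^sub>m p p) (0\<^sub>m p p) (diag_of p (eT p k a))"
      unfolding T_elem_def Let_def DC_GP eT_def xi_def by simp
    show ?thesis
    proof (cases "i < p")
      case True
      then show ?thesis using i j unfolding e by (auto simp: cT_def piT_def)
    next
      case False
      then show ?thesis using i j unfolding e by (auto simp: cT_def piT_def diag_of_def)
    qed
  qed
qed (auto simp: T_elem_def cycle_mat_def)

lemma xi_pow: "xi p ^ n = exp (2 * pi * \<i> * of_nat n / of_nat (p^2))"
  unfolding xi_def by (subst exp_of_nat_mult[symmetric]) (simp add: field_simps)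

lemma xi_nonzero[simp]: "xi p \<noteq> 0" by (simp add: xi_def)

lemma xi_norm[simp]: "cmod (xi p ^ n) = 1"
  unfolding xi_pow by (simp add: norm_exp_eq_Re)

lemma xi_p2: "p > 0 \<Longrightarrow> xi p ^ (p^2) = 1"
  unfolding xi_pow by simp

lemma xi_mod: "p > 0 \<Longrightarrow> xi p ^ n = xi p ^ (n mod p^2)"
proof -
  assume "p > 0"
  have "xi p ^ n = xi p ^ (p^2 * (n div p^2) + n mod p^2)" by simp
  also have "\<dots> = xi p ^ (n mod p^2)" by (simp only: power_add power_mult xi_p2[OF \<open>p>0\<close>]) simp
  finally show ?thesis .
qed

lemma xi_cong: "p > 0 \<Longrightarrow> n mod p^2 = m mod p^2 \<Longrightarrow> xi p ^ n = xi p ^ m"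
  by (metis xi_mod)

lemma shift_bij:
  fixes p K r :: nat
  assumes "prime p" "K mod p \<noteq> 0" "r < p"
  shows "bij_betw (\<lambda>s. (r + s*K) mod p) {..<p} {..<p}"
proof -
  have p0: "p > 0" using assms(1) by (simp add: prime_gt_0_nat)
  have inj: "inj_on (\<lambda>s. (r + s*K) mod p) {..<p}"
  proof (rule inj_onI)
    fix x y assume x: "x \<in> {..<p}" and y: "y \<in> {..<p}" and e: "(r + x*K) mod p = (r + y*K) mod p"
    show "x = y"
    proof (rule ccontr)
      assume "x \<noteq> y"
      then consider "x < y" | "y < x" by linarith
      then show False
      proof cases
        case 1
        have "p dvd (r + y*K) - (r + x*K)" using e 1 by (subst mod_eq_dvd_iff_nat[symmetric]) auto
        hence "p dvd (y - x) * K" by (simp add: diff_mult_distrib)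
        hence "p dvd (y - x) \<or> p dvd K" using assms(1) prime_dvd_mult_iff by blast
        thus False using 1 y assms(2) by (auto dest: dvd_imp_le simp: mod_eq_0_iff_dvd)
      next
        case 2
        have "p dvd (r + x*K) - (r + y*K)" using e 2 by (subst mod_eq_dvd_iff_nat[symmetric]) auto
        hence "p dvd (x - y) * K" by (simp add: diff_mult_distrib)
        hence "p dvd (x - y) \<or> p dvd K" using assms(1) prime_dvd_mult_iff by blast
        thus False using 2 x assms(2) by (auto dest: dvd_imp_le simp: mod_eq_0_iff_dvd)
      qed
    qed
  qed
  moreover have "(\<lambda>s. (r + s*K) mod p) ` {..<p} \<subseteq> {..<p}" using p0 by auto
  ultimately have "(\<lambda>s. (r + s*K) mod p) ` {..<p} = {..<p}" by (simp add: endo_inj_surj)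
  with inj show ?thesis by (simp add: bij_betw_def)
qed

lemma shift_prod:
  fixes p K r :: nat
  assumes "prime p" "K mod p \<noteq> 0" "r < p"
  shows "(\<Prod>s<p. f ((r + s*K) mod p)) = (\<Prod>j<p. (f j :: complex))"
  using prod.reindex_bij_betw[OF shift_bij[OF assms], of f] by simp

lemma piT_pow: "i < p \<Longrightarrow> (piT p k ^^ s) i = (i + s*k) mod p"
proof (induction s)
  case (Suc s) thus ?case by (simp add: piT_def mod_add_left_eq mod_add_right_eq algebra_simps)
qed simp

lemma piT_pow2: "\<not> i < p \<Longrightarrow> (piT p k ^^ s) i = i"
  by (induction s) (auto simp: piT_def)

lemma piT_lt: "i < 2*p \<Longrightarrow> piT p k i < 2*p"
proof -
  assume "i < 2*p"
  hence "p > 0" by simp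
  hence "(i+k) mod p < p" by simp
  hence "(i+k) mod p < 2*p" by linarith
  thus ?thesis using \<open>i < 2*p\<close> by (auto simp: piT_def)
qed

lemma piT_lt1: "i < p \<Longrightarrow> piT p k i < p"
  by (auto simp: piT_def)

lemma piT_comp: "piT p k' (piT p k i) = piT p (k + k') i"
  by (auto simp: piT_def mod_add_left_eq add.assoc)

lemma piT_inj: "inj_on (piT p k) {..<2*p}"
proof (rule inj_onI)
  fix x y assume x: "x \<in> {..<2*p}" and y: "y \<in> {..<2*p}" and e: "piT p k x = piT p k y"
  show "x = y"
  proof (cases "x < p \<and> y < p")
    case True
    have e2: "(x + k) mod p = (y + k) mod p" using e True by (simp add: piT_def)
    show ?thesis
    proof (rule ccontr)
      assume "x \<noteq> y"
      then consider "x < y" | "y < x" by linarith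
      then show False
      proof cases
        case 1
        have "p dvd (y + k) - (x + k)" using e2 1 by (subst mod_eq_dvd_iff_nat[symmetric]) auto
        thus False using 1 True by (auto dest: dvd_imp_le)
      next
        case 2
        have "p dvd (x + k) - (y + k)" using e2 2 by (subst mod_eq_dvd_iff_nat[symmetric]) auto
        thus False using 2 True by (auto dest: dvd_imp_le)
      qed
    qed
  next
    case False
    have m: "z < p \<Longrightarrow> (z + k) mod p < p" for z by simp
    show ?thesis
    proof (cases "x < p")
      case True
      hence "\<not> y < p" using False by simp
      thus ?thesis using e m[OF True] True by (simp add: piT_def)
    next
      case xf: False
      show ?thesis
      proof (cases "y < p")
        case True thus ?thesis using e m[OF True] xf by (simp add: piT_def)
      next
        case False thus ?thesis using e xf by (simp add: piT_def)
      qed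
    qed
  qed
qed

lemma eig_step:
  assumes "\<forall>i<n. \<pi> i < n" "v \<in> carrier_vec n" "GP n c \<pi> *\<^sub>v v = \<gamma> \<cdot>\<^sub>v v" "i < n"
  shows "\<gamma> * v $ i = c i * v $ (\<pi> i)"
proof -
  have "(GP n c \<pi> *\<^sub>v v) $ i = (\<gamma> \<cdot>\<^sub>v v) $ i" using assms(3) by simp
  thus ?thesis using GP_mult_vec[of \<pi> i n v c] assms by simp
qed

lemma eig_iter:
  assumes "\<forall>i<n. \<pi> i < n" "v \<in> carrier_vec n" "GP n c \<pi> *\<^sub>v v = \<gamma> \<cdot>\<^sub>v v" "i < n"
  shows "\<gamma>^t * v $ i = (\<Prod>s<t. c ((\<pi>^^s) i)) * v $ ((\<pi>^^t) i)"
proof (induction t)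
  case (Suc t)
  have lt: "(\<pi>^^t) i < n" using assms(1,4) by (induction t) auto
  have "\<gamma>^Suc t * v $ i = \<gamma> * (\<gamma>^t * v $ i)" by simp
  also have "\<dots> = (\<Prod>s<t. c ((\<pi>^^s) i)) * (\<gamma> * v $ ((\<pi>^^t) i))" using Suc by simp
  also have "\<dots> = (\<Prod>s<t. c ((\<pi>^^s) i)) * (c ((\<pi>^^t) i) * v $ (\<pi> ((\<pi>^^t) i)))"
    using eig_step[OF assms(1-3) lt] by simp
  also have "\<dots> = (\<Prod>s<Suc t. c ((\<pi>^^s) i)) * v $ ((\<pi>^^Suc t) i)" by simp
  finally show ?case .
qed simp

lemma eigenvalue_diag_entry:
  assumes "\<forall>i<n. \<pi> i < n" "inj_on \<pi> {..<n}" "i < n" "\<pi> i = i"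
  shows "eigenvalue (GP n c \<pi>) (c i)"
  unfolding eigenvalue_def eigenvector_def
proof (intro exI conjI)
  show "unit_vec n i \<in> carrier_vec (dim_row (GP n c \<pi>))" by simp
  show "unit_vec n i \<noteq> 0\<^sub>v (dim_row (GP n c \<pi>))"
    using assms(3) by (metis GP_carrier(2) index_unit_vec(1) index_zero_vec(1) zero_neq_one)
  show "GP n c \<pi> *\<^sub>v unit_vec n i = c i \<cdot>\<^sub>v unit_vec n i"
  proof (rule eq_vecI)
    fix r assume "r < dim_vec (c i \<cdot>\<^sub>v unit_vec n i)"
    hence r: "r < n" by simp
    have "(GP n c \<pi> *\<^sub>v unit_vec n i) $ r = c r * unit_vec n i $ (\<pi> r)"
      using GP_mult_vec[of \<pi> r n "unit_vec n i" c] assms r by simp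
    also have "\<dots> = (c i \<cdot>\<^sub>v unit_vec n i) $ r"
    proof (cases "r = i")
      case False
      hence "\<pi> r \<noteq> i" using assms r by (metis inj_onD lessThan_iff)
      thus ?thesis using False r assms by simp
    qed (use assms in simp)
    finally show "(GP n c \<pi> *\<^sub>v unit_vec n i) $ r = (c i \<cdot>\<^sub>v unit_vec n i) $ r" .
  qed simp
qed

lemma tk_nonzero:
  fixes p k t :: nat
  assumes "prime p" "k mod p \<noteq> 0" "0 < t" "t < p"
  shows "(t * k) mod p \<noteq> 0"
proof
  assume "(t * k) mod p = 0"
  hence "p dvd t * k" by (simp add: mod_eq_0_iff_dvd)
  hence "p dvd t \<or> p dvd k" using assms(1) prime_dvd_mult_iff by blast
  thus False using assms by (auto dest: dvd_imp_le simp: mod_eq_0_iff_dvd)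
qed

lemma eigenvalue_root:
  fixes p k :: nat and \<omega> :: complex
  assumes p: "prime p" and k: "k mod p \<noteq> 0" and prodc: "(\<Prod>j<p. c j) = 1" and om: "\<omega>^p = 1"
  shows "eigenvalue (GP (2*p) c (piT p k)) \<omega>"
proof -
  define n where "n = 2*p"
  define \<pi> where "\<pi> = piT p k"
  have p0: "p > 0" using p by (simp add: prime_gt_0_nat)
  have \<omega>0: "\<omega> \<noteq> 0" proof
    assume "\<omega> = 0" thus False using om p0 by (simp add: power_0_left)
  qed
  define w where "w = inverse \<omega>"
  have wp: "w^p = 1" using om by (simp add: w_def power_inverse)
  define P where "P t r = (\<Prod>s<t. c ((\<pi>^^s) r))" for t r
  define f where "f r t = (if (\<pi>^^t) r = 0 then P t r else 0)" for r t
  define g where "g r t = w^t * f r t" for r t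
  define v where "v = vec n (\<lambda>r. \<Sum>t<p. g r t)"
  have v_carr: "v \<in> carrier_vec n" by (simp add: v_def)
  have pilt: "\<forall>i<n. \<pi> i < n" using piT_lt by (simp add: \<pi>_def n_def)
  have gp: "g r p = g r 0" if r: "r < n" for r
  proof (cases "r < p")
    case True
    have pp: "(\<pi>^^p) r = r" using True piT_pow[OF True, where k=k and s=p] by (simp add: \<pi>_def)
    show ?thesis
    proof (cases "r = 0")
      case True
      have "P p 0 = (\<Prod>s<p. c ((0 + s*k) mod p))"
        unfolding P_def \<pi>_def using piT_pow[OF p0, where k=k] by simp
      also have "\<dots> = 1" using shift_prod[OF p k p0, of c] prodc by simp
      finally show ?thesis using True pp wp by (simp add: g_def f_def P_def)
    next
      case False thus ?thesis using pp wp by (simp add: g_def f_def)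
    qed
  next
    case False
    have pp: "(\<pi>^^t) r = r" for t using piT_pow2[OF False] by (simp add: \<pi>_def)
    show ?thesis using False p0 by (simp add: g_def f_def pp)
  qed
  have shift: "(\<Sum>t<p. g r (Suc t)) = (\<Sum>t<p. g r t)" if "r < n" for r
  proof -
    have "g r 0 + (\<Sum>t<p. g r (Suc t)) = (\<Sum>t<Suc p. g r t)" by (simp only: sum.lessThan_Suc_shift)
    also have "\<dots> = (\<Sum>t<p. g r t) + g r p" by simp
    finally show ?thesis using gp[OF that] by simp
  qed
  have Mv: "GP n c \<pi> *\<^sub>v v = \<omega> \<cdot>\<^sub>v v"
  proof (rule eq_vecI)
    fix r assume "r < dim_vec (\<omega> \<cdot>\<^sub>v v)"
    hence r: "r < n" by (simp add: v_def)
    have pr: "\<pi> r < n" using pilt r by simp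
    have "(GP n c \<pi> *\<^sub>v v) $ r = c r * v $ (\<pi> r)" using GP_mult_vec[of \<pi> r n v c, OF pr r v_carr] .
    also have "\<dots> = (\<Sum>t<p. c r * g (\<pi> r) t)" using pr by (simp add: v_def sum_distrib_left)
    also have "\<dots> = (\<Sum>t<p. \<omega> * g r (Suc t))"
    proof (rule sum.cong)
      fix t
      have it: "(\<pi>^^t) (\<pi> r) = (\<pi>^^Suc t) r" by (simp add: funpow_Suc_right del: funpow.simps)
      have PP: "c r * P t (\<pi> r) = P (Suc t) r"
        unfolding P_def by (simp only: prod.lessThan_Suc_shift) (simp add: funpow_Suc_right del: funpow.simps)
      have "c r * g (\<pi> r) t = w^t * (if (\<pi>^^Suc t) r = 0 then P (Suc t) r else 0)"
        unfolding g_def f_def it using PP by auto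
      also have "\<dots> = \<omega> * g r (Suc t)" unfolding g_def f_def using \<omega>0 by (simp add: w_def)
      finally show "c r * g (\<pi> r) t = \<omega> * g r (Suc t)" .
    qed simp
    also have "\<dots> = \<omega> * (\<Sum>t<p. g r t)" using shift[OF r] by (simp add: sum_distrib_left[symmetric])
    also have "\<dots> = (\<omega> \<cdot>\<^sub>v v) $ r" using r by (simp add: v_def)
    finally show "(GP n c \<pi> *\<^sub>v v) $ r = (\<omega> \<cdot>\<^sub>v v) $ r" .
  qed (simp add: v_def)
  have v0: "v $ 0 = 1"
  proof -
    have z: "g 0 (Suc t) = 0" if "t < p - 1" for t
    proof -
      have "(\<pi>^^Suc t) 0 = (Suc t * k) mod p" using piT_pow[OF p0, where k=k and s="Suc t"] by (simp add: \<pi>_def)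
      moreover have "(Suc t * k) mod p \<noteq> 0" using tk_nonzero[OF p k, of "Suc t"] that by simp
      ultimately show ?thesis by (simp add: g_def f_def)
    qed
    have "v $ 0 = (\<Sum>t<Suc (p-1). g 0 t)" using p0 by (simp add: v_def n_def)
    also have "\<dots> = g 0 0 + (\<Sum>t<p-1. g 0 (Suc t))" by (simp only: sum.lessThan_Suc_shift)
    also have "(\<Sum>t<p-1. g 0 (Suc t)) = 0" using z by simp
    finally show ?thesis by (simp add: g_def f_def P_def)
  qed
  have n0: "0 < n" using p0 by (simp add: n_def)
  have "v \<noteq> 0\<^sub>v n"
  proof
    assume "v = 0\<^sub>v n"
    hence "v $ 0 = 0" using n0 by simp
    thus False using v0 by simp
  qed
  thus ?thesis unfolding eigenvalue_def eigenvector_def using v_carr Mv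
    by (auto simp: n_def \<pi>_def)
qed

lemma round_lemma:
  fixes p :: nat and \<gamma> :: complex
  assumes p: "p \<ge> 2" and g: "cmod \<gamma> = 1"
  shows "\<exists>m. \<bar>Arg (xi p ^ m / \<gamma>)\<bar> \<le> pi / (real p)^2"
proof -
  define N where "N = (real p)^2"
  have N4: "N \<ge> 4" using p unfolding N_def
    by (metis numeral_Bit0_eq_double of_nat_numeral of_nat_le_iff power2_eq_square power_mono zero_le_numeral power2_nat_le_eq_le real_sqrt_four) 
  define \<theta> where "\<theta> = Arg \<gamma>"
  have g\<theta>: "exp (\<i> * of_real \<theta>) = \<gamma>" using g complex_norm_eq_1_exp_eq \<theta>_def by simp
  define n where "n = \<lfloor>\<theta> * N / (2*pi) + 1/2\<rfloor>"
  have n1: "real_of_int n \<le> \<theta> * N / (2*pi) + 1/2" unfolding n_def by linarith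
  have n2: "\<theta> * N / (2*pi) + 1/2 < real_of_int n + 1" unfolding n_def by linarith
  define x where "x = 2 * pi * real_of_int n / N - \<theta>"
  have Npos: "N > 0" using N4 by simp
  have xb: "\<bar>x\<bar> \<le> pi / N"
  proof -
    have "\<bar>real_of_int n - \<theta> * N / (2*pi)\<bar> \<le> 1/2" using n1 n2 by linarith
    hence "\<bar>real_of_int n - \<theta> * N / (2*pi)\<bar> * (2*pi/N) \<le> 1/2 * (2*pi/N)"
      using Npos by (intro mult_right_mono) auto
    moreover have "\<bar>real_of_int n - \<theta> * N / (2*pi)\<bar> * (2*pi/N) = \<bar>x\<bar>"
      unfolding x_def using Npos pi_gt_zero
      by (simp add: abs_mult[symmetric] field_simps)
    ultimately show ?thesis by simp
  qed
  have "pi / N < pi" using N4 pi_gt_zero by (simp add: divide_less_eq)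
  hence xpi: "\<bar>x\<bar> < pi" using xb by linarith
  define q where "q = n div int (p^2)"
  define m where "m = nat (n mod int (p^2))"
  have "n mod int (p^2) \<ge> 0" using p by simp
  hence "int m = n mod int (p^2)" by (simp add: m_def)
  also have "\<dots> = n - int (p^2) * q" unfolding q_def by (rule minus_mult_div_eq_mod[symmetric])
  finally have mq: "int m = n - int (p^2) * q" .
  have "xi p ^ m = exp (2 * pi * \<i> * of_nat m / of_nat (p^2))" by (rule xi_pow)
  also have "of_nat m = (of_int n - of_nat (p^2) * of_int q :: complex)"
    using arg_cong[OF mq, of "of_int :: int \<Rightarrow> complex"] by simp
  also have "2 * pi * \<i> * (of_int n - of_nat (p^2) * of_int q) / of_nat (p^2)
      = 2 * pi * \<i> * of_int n / of_nat (p^2) - (2 * of_int q * pi) * \<i>"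
    using p by (simp add: field_simps)
  also have "exp \<dots> = exp (2 * pi * \<i> * of_int n / of_nat (p^2))"
  proof -
    have "exp ((2 * of_int q * pi) * \<i>) = 1" by (rule exp_integer_2pi) simp
    thus ?thesis by (simp add: exp_diff)
  qed
  finally have xm: "xi p ^ m = exp (2 * pi * \<i> * of_int n / of_nat (p^2))" .
  have "xi p ^ m / \<gamma> = exp (\<i> * of_real x)"
    unfolding xm g\<theta>[symmetric] x_def N_def by (simp add: exp_diff[symmetric] field_simps)
  hence "Arg (xi p ^ m / \<gamma>) = x"
    by (intro Arg_unique[of 1]) (use xpi in \<open>auto simp: mult.commute\<close>)
  thus ?thesis using xb unfolding N_def by auto
qed

lemma prod_list_upt: "prod_list (map f [0..<n]) = (\<Prod>i<n. (f i :: 'a :: comm_monoid_mult))"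
  by (induction n) auto

lemma det_diag: "det (diag_of p d) = (\<Prod>i<p. d i)"
proof -
  have "upper_triangular (diag_of p d)" by (auto simp: upper_triangular_def diag_of_def)
  hence "det (diag_of p d) = prod_list (diag_mat (diag_of p d))"
    using det_upper_triangular[of "diag_of p d" p] by simp
  also have "\<dots> = (\<Prod>i<p. d i)" by (simp add: diag_mat_def prod_list_upt diag_of_def)
  finally show ?thesis .
qed

lemma rot_prod:
  fixes p k :: nat
  assumes "prime p"
  shows "(\<Prod>j<p. f ((j + k) mod p)) = (\<Prod>j<p. (f j :: complex))"
proof -
  have p0: "p > 0" using assms by (simp add: prime_gt_0_nat)
  have "(\<Prod>j<p. f ((j + k) mod p)) = (\<Prod>j<p. f ((k mod p + j * 1) mod p))"
    by (rule prod.cong) (auto simp: mod_add_right_eq add.commute)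
  also have "\<dots> = (\<Prod>j<p. f j)"
    by (rule shift_prod) (use assms p0 prime_gt_1_nat in auto)
  finally show ?thesis .
qed

lemma eT_mult:
  fixes p j k k' a b :: nat
  assumes p0: "p > 0" and j: "0 < j"
  shows "xi p ^ (j*k + a*p) * xi p ^ (j*k' + b*p) = xi p ^ (j * ((k+k') mod p) + ((a + b + j*((k+k') div p)) mod p) * p)"
proof -
  define Q where "Q = (k+k') div p"
  define X where "X = a + b + j*Q"
  have kk: "j*(k + k') = j*((k+k') mod p + p*Q)" unfolding Q_def by simp
  have "j*k + a*p + (j*k' + b*p) = j*(k+k') + p*(a+b)" by (simp add: algebra_simps)
  also have "\<dots> = j*((k+k') mod p + p*Q) + p*(a+b)" using kk by simp
  also have "\<dots> = j * ((k+k') mod p) + p*X" unfolding X_def by (simp add: algebra_simps)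
  finally have E: "j*k + a*p + (j*k' + b*p) = j * ((k+k') mod p) + p*X" .
  have "(j * ((k+k') mod p) + p*X) mod p^2 = (j * ((k+k') mod p) + p * (X mod p)) mod p^2"
    unfolding power2_eq_square by (metis mod_add_right_eq mod_mult_mult1)
  hence "(j*k + a*p + (j*k' + b*p)) mod p^2 = (j * ((k+k') mod p) + (X mod p) * p) mod p^2"
    unfolding E by (simp add: mult.commute)
  hence "xi p ^ (j*k + a*p + (j*k' + b*p)) = xi p ^ (j * ((k+k') mod p) + (X mod p) * p)"
    by (rule xi_cong[OF p0])
  thus ?thesis unfolding X_def Q_def by (simp add: power_add)
qed

lemma T_prod:
  fixes p k k' :: nat
  assumes p0: "p > 0"
  shows "T_elem p d k a * T_elem p d' k' a' =
    T_elem p (\<lambda>i. d i * d' ((i+k) mod p)) ((k+k') mod p) (\<lambda>j. (a j + a' j + j*((k+k') div p)) mod p)"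
  unfolding T_GP
proof (subst GP_mult, (simp add: piT_lt), rule GP_eq)
  fix i assume i: "i < 2*p"
  show "cT p d k a i * cT p d' k' a' (piT p k i) =
      cT p (\<lambda>i. d i * d' ((i+k) mod p)) ((k+k') mod p) (\<lambda>j. (a j + a' j + j*((k+k') div p)) mod p) i \<and>
      piT p k' (piT p k i) = piT p ((k+k') mod p) i"
  proof (cases "i < p")
    case True
    have lt: "(i+k) mod p < p" using p0 by simp
    have e1: "piT p k i = (i+k) mod p" using True by (simp add: piT_def)
    have e2: "((i+k) mod p + k') mod p = (i + (k+k') mod p) mod p"
      by (metis add.assoc mod_add_left_eq mod_add_right_eq)
    show ?thesis using True lt unfolding e1 by (simp add: cT_def piT_def e2)
  next
    case False
    have pi: "piT p k i = i" "piT p k' i = i" "piT p ((k+k') mod p) i = i" using False by (auto simp: piT_def)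
    show ?thesis
    proof (cases "i - p = 0")
      case True thus ?thesis using False pi by (simp add: cT_def eT_def)
    next
      case False2: False
      thus ?thesis using False pi eT_mult[OF p0, of "i-p" k "a (i-p)" k' "a' (i-p)"] by (simp add: cT_def eT_def)
    qed
  qed
qed

lemma T_setD:
  assumes "A \<in> T_set p"
  obtains d k a where "A = T_elem p d k a" "\<forall>i<p. cmod (d i) = 1" "(\<Prod>i<p. d i) = 1" "k < p" "\<forall>j\<in>{1..p-1}. a j < p"
  using assms unfolding T_set_def det_diag by blast

lemma T_setI:
  assumes "\<forall>i<p. cmod (d i) = 1" "(\<Prod>i<p. d i) = 1" "k < p" "\<forall>j\<in>{1..p-1}. a j < p"
  shows "T_elem p d k a \<in> T_set p"
  using assms unfolding T_set_def det_diag by blast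

lemma T_closed:
  assumes p: "prime p" and A: "A \<in> T_set p" and B: "B \<in> T_set p"
  shows "A * B \<in> T_set p"
proof -
  have p0: "p > 0" using p by (simp add: prime_gt_0_nat)
  obtain d k a where A': "A = T_elem p d k a" "\<forall>i<p. cmod (d i) = 1" "(\<Prod>i<p. d i) = 1" "k < p" "\<forall>j\<in>{1..p-1}. a j < p"
    using T_setD[OF A] by metis
  obtain d' k' a' where B': "B = T_elem p d' k' a'" "\<forall>i<p. cmod (d' i) = 1" "(\<Prod>i<p. d' i) = 1" "k' < p" "\<forall>j\<in>{1..p-1}. a' j < p"
    using T_setD[OF B] by metis
  have "(\<Prod>i<p. d i * d' ((i+k) mod p)) = (\<Prod>i<p. d i) * (\<Prod>i<p. d' ((i+k) mod p))"
    by (rule prod.distrib)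
  also have "\<dots> = 1" using A'(3) B'(3) rot_prod[OF p, of d' k] by simp
  finally have pr: "(\<Prod>i<p. d i * d' ((i+k) mod p)) = 1" .
  have nm: "\<forall>i<p. cmod (d i * d' ((i+k) mod p)) = 1" using A'(2) B'(2) p0 by (simp add: norm_mult)
  show ?thesis unfolding A'(1) B'(1) T_prod[OF p0]
    by (rule T_setI[OF nm pr]) (use p0 in auto)
qed

lemma mod_compl: "(p::nat) > 0 \<Longrightarrow> (X + (p - X mod p) mod p) mod p = 0"
proof (cases "X mod p = 0")
  case True thus ?thesis by simp
next
  case False
  assume p0: "p > 0"
  have lt: "X mod p < p" using p0 by simp
  have "(p - X mod p) mod p = p - X mod p" using False lt by simp
  moreover have "X + (p - X mod p) = p * (X div p + 1)"
  proof -
    have h: "X div p * p + X mod p = X" by (rule div_mult_mod_eq)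
    have "X + (p - X mod p) = X div p * p + p" using h lt by linarith
    thus ?thesis by (simp add: algebra_simps)
  qed
  ultimately show ?thesis by simp
qed

lemma T_inv:
  assumes p: "prime p" and A: "A \<in> T_set p"
  shows "\<exists>B\<in>T_set p. A * B = 1\<^sub>m (2*p) \<and> B * A = 1\<^sub>m (2*p)"
proof -
  have p0: "p > 0" using p by (simp add: prime_gt_0_nat)
  obtain d k a where A': "A = T_elem p d k a" "\<forall>i<p. cmod (d i) = 1" "(\<Prod>i<p. d i) = 1" "k < p" "\<forall>j\<in>{1..p-1}. a j < p"
    using T_setD[OF A] by metis
  define k' where "k' = (p - k) mod p"
  define Q where "Q = (k+k') div p"
  define d' where "d' j = inverse (d ((j + k') mod p))" for j
  define a' where "a' j = (p - (a j + j*Q) mod p) mod p" for j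
  define B where "B = T_elem p d' k' a'"
  have kk: "(k + k') mod p = 0" unfolding k'_def using A'(4)
    by (cases "k = 0") (auto simp: mod_add_right_eq)
  have Bin: "B \<in> T_set p"
  proof -
    have "(\<Prod>i<p. d' i) = inverse (\<Prod>i<p. d ((i + k') mod p))"
      unfolding d'_def using prod_inversef[of "\<lambda>i. d ((i + k') mod p)" "{..<p}"] by (simp add: comp_def)
    also have "\<dots> = 1" using rot_prod[OF p, of d k'] A'(3) by simp
    finally have "(\<Prod>i<p. d' i) = 1" .
    moreover have "\<forall>i<p. cmod (d' i) = 1" using A'(2) p0 by (simp add: d'_def norm_inverse)
    ultimately show ?thesis unfolding B_def by (intro T_setI) (auto simp: k'_def a'_def p0)
  qed
  have AB: "A * B = 1\<^sub>m (2*p)"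
    unfolding A'(1) B_def T_prod[OF p0] unfolding kk T_GP one_GP
  proof (rule GP_eq)
    fix i assume i: "i < 2*p"
    have "cT p (\<lambda>i. d i * d' ((i + k) mod p)) 0 (\<lambda>j. (a j + a' j + j * ((k + k') div p)) mod p) i = 1"
    proof (cases "i < p")
      case True
      have "((i + k) mod p + k') mod p = i" using True kk
        by (metis add.assoc mod_add_left_eq mod_add_right_eq add_0_right mod_less)
      moreover have "d i \<noteq> 0" using A'(2) True by auto
      ultimately show ?thesis using True by (simp add: cT_def d'_def)
    next
      case False
      have "(a j + a' j + j * Q) mod p = 0" for j
        unfolding a'_def using mod_compl[OF p0, of "a j + j*Q"] by (simp add: algebra_simps)
      thus ?thesis using False by (simp add: cT_def eT_def Q_def)
    qed
    moreover have "piT p 0 i = id i" by (auto simp: piT_def)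
    ultimately show "cT p (\<lambda>i. d i * d' ((i + k) mod p)) 0 (\<lambda>j. (a j + a' j + j * ((k + k') div p)) mod p) i = 1 \<and>
         piT p 0 i = id i" by simp
  qed
  have BA: "B * A = 1\<^sub>m (2*p)"
    by (rule mat_mult_left_right_inverse[OF _ _ AB]) (auto simp: A'(1) B_def T_GP)
  show ?thesis using Bin AB BA by blast
qed



lemma adjoint_index:
  assumes "A \<in> carrier_mat n n" "i < n" "j < n"
  shows "mat_adjoint A $$ (i,j) = cnj (A $$ (j,i))"
  using assms unfolding mat_adjoint_def by (simp add: mat_of_rows_index)

lemma adjoint_dims:
  assumes "A \<in> carrier_mat n n"
  shows "dim_row (mat_adjoint A) = n" "dim_col (mat_adjoint A) = n"
  using assms unfolding mat_adjoint_def by auto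

lemma GP_unitary:
  assumes pil: "\<forall>i<n. \<pi> i < n" and inj: "inj_on \<pi> {..<n}" and cn: "\<forall>i<n. cmod (c i) = 1"
  shows "unitary_mat n (GP n c \<pi>)"
  unfolding unitary_mat_def
proof (intro conjI)
  show "GP n c \<pi> \<in> carrier_mat n n" by simp
  have surj: "\<pi> ` {..<n} = {..<n}" using pil inj by (intro endo_inj_surj) auto
  show "mat_adjoint (GP n c \<pi>) * GP n c \<pi> = 1\<^sub>m n"
  proof (rule eq_matI)
    fix i j assume "i < dim_row (1\<^sub>m n :: complex mat)" "j < dim_col (1\<^sub>m n :: complex mat)"
    hence i: "i < n" and j: "j < n" by auto
    obtain l0 where l0: "l0 < n" "\<pi> l0 = i" using surj i by (metis imageE lessThan_iff)
    have iff: "\<pi> l = i \<longleftrightarrow> l = l0" if "l < n" for l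
      using inj l0 that by (metis inj_onD lessThan_iff)
    have "(mat_adjoint (GP n c \<pi>) * GP n c \<pi>) $$ (i,j) = (\<Sum>l<n. mat_adjoint (GP n c \<pi>) $$ (i,l) * GP n c \<pi> $$ (l,j))"
      using i j adjoint_dims[OF GP_carrier(1), of n c \<pi>] by (simp add: scalar_prod_def lessThan_atLeast0)
    also have "\<dots> = (\<Sum>l<n. if l = l0 then (if j = i then 1 else 0) else 0)"
    proof (rule sum.cong)
      fix l assume l: "l \<in> {..<n}"
      hence ln: "l < n" by simp
      have cc: "cnj (c l) * c l = 1"
        using cn ln complex_norm_square[of "c l"] by (simp add: mult.commute)
      have "mat_adjoint (GP n c \<pi>) $$ (i,l) * GP n c \<pi> $$ (l,j) =
          cnj (if i = \<pi> l then c l else 0) * (if j = \<pi> l then c l else 0)"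
        using adjoint_index[OF GP_carrier(1) i ln] i j ln by simp
      also have "\<dots> = (if l = l0 then (if j = i then 1 else 0) else 0)"
        using iff[OF ln] cc l0 by auto
      finally show "mat_adjoint (GP n c \<pi>) $$ (i,l) * GP n c \<pi> $$ (l,j) = (if l = l0 then (if j = i then 1 else 0) else 0)" .
    qed simp
    also have "\<dots> = 1\<^sub>m n $$ (i,j)" using l0 i j by simp
    finally show "(mat_adjoint (GP n c \<pi>) * GP n c \<pi>) $$ (i,j) = 1\<^sub>m n $$ (i,j)" .
  qed (use adjoint_dims[OF GP_carrier(1), of n c \<pi>] in auto)
qed

lemma H1:
  assumes "i < 2*p" "p \<le> i"
  shows "cT p d k a i \<in> spectrum_mat (T_elem p d k a)"
proof -
  have "piT p k i = i" using assms by (simp add: piT_def)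
  thus ?thesis unfolding spectrum_mat_def T_GP using assms
    by (intro CollectI eigenvalue_diag_entry) (auto simp: piT_lt piT_inj)
qed

lemma H1':
  assumes "i < p"
  shows "d i \<in> spectrum_mat (T_elem p d 0 a)"
proof -
  have "piT p 0 i = i" using assms by (simp add: piT_def)
  hence "cT p d 0 a i \<in> spectrum_mat (T_elem p d 0 a)"
    unfolding spectrum_mat_def T_GP using assms
    by (intro CollectI eigenvalue_diag_entry) (auto simp: piT_lt piT_inj)
  thus ?thesis using assms by (simp add: cT_def)
qed

lemma H3: "p > 0 \<Longrightarrow> 1 \<in> spectrum_mat (T_elem p d k a)"
  using H1[of p p d k a] by (simp add: cT_def eT_def)

lemma H2:
  assumes p: "prime p" and k: "0 < k" "k < p" and pd: "(\<Prod>i<p. d i) = 1" and om: "\<omega>^p = 1"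
  shows "\<omega> \<in> spectrum_mat (T_elem p d k a)"
proof -
  have "(\<Prod>j<p. cT p d k a j) = 1" using pd by (simp add: cT_def)
  moreover have "k mod p \<noteq> 0" using k by simp
  ultimately show ?thesis unfolding spectrum_mat_def T_GP
    using eigenvalue_root[OF p] om by blast
qed

lemma decomp:
  assumes p: "prime p" and k: "0 < k" "k < p" and pd: "(\<Prod>i<p. d i) = 1"
    and k': "0 < k'" "k' < p" and pd': "(\<Prod>i<p. d' i) = 1"
  shows "\<exists>\<alpha>\<in>spectrum_mat (T_elem p d k a). \<exists>\<beta>\<in>spectrum_mat (T_elem p d' k' a'). \<alpha> * \<beta> = xi p ^ m"
proof -
  have p0: "p > 0" using p by (simp add: prime_gt_0_nat)
  show ?thesis
  proof (cases "m mod p = 0")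
    case True
    have "m = p * (m div p)" using True by (metis div_mult_mod_eq add_0_right mult.commute)
    hence "(xi p ^ m)^p = xi p ^ (p^2 * (m div p))" by (simp add: power_mult[symmetric] power2_eq_square algebra_simps)
    also have "\<dots> = 1" by (simp add: power_mult xi_p2[OF p0])
    finally have "xi p ^ m \<in> spectrum_mat (T_elem p d k a)" using H2[OF p k pd] by blast
    moreover have "1 \<in> spectrum_mat (T_elem p d' k' a')" using H3[OF p0] .
    ultimately show ?thesis by force
  next
    case False
    have "m mod p \<in> (\<lambda>s. (0 + s*k) mod p) ` {..<p}"
      using shift_bij[OF p, of k 0] k p0 by (simp add: bij_betw_def)
    then obtain j where j: "j < p" "(j*k) mod p = m mod p" by auto
    have j0: "j \<noteq> 0" proof assume "j = 0" thus False using j False by simp qed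
    define \<alpha> where "\<alpha> = xi p ^ (j*k + a j * p)"
    have "cT p d k a (p + j) = \<alpha>" using j0 by (simp add: cT_def eT_def \<alpha>_def)
    hence \<alpha>in: "\<alpha> \<in> spectrum_mat (T_elem p d k a)" using H1[of "p+j" p d k a] j by simp
    define \<beta> where "\<beta> = xi p ^ m / \<alpha>"
    have a0: "\<alpha> \<noteq> 0" by (simp add: \<alpha>_def)
    have "(m*p) mod (p*p) = ((j*k + a j * p)*p) mod (p*p)"
    proof -
      have "(m*p) mod (p*p) = (m mod p) * p" by (rule mod_mult_mult2)
      moreover have "((j*k + a j * p)*p) mod (p*p) = ((j*k + a j * p) mod p) * p" by (rule mod_mult_mult2)
      moreover have "(j*k + a j * p) mod p = (j*k) mod p" by simp
      ultimately show ?thesis using j(2) by simp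
    qed
    hence "xi p ^ (m*p) = xi p ^ ((j*k + a j * p)*p)" by (intro xi_cong[OF p0]) (simp add: power2_eq_square)
    hence "\<beta>^p = 1" unfolding \<beta>_def \<alpha>_def by (simp add: power_divide power_mult[symmetric])
    hence "\<beta> \<in> spectrum_mat (T_elem p d' k' a')" using H2[OF p k' pd'] by blast
    moreover have "\<alpha> * \<beta> = xi p ^ m" using a0 by (simp add: \<beta>_def)
    ultimately show ?thesis using \<alpha>in by blast
  qed
qed

lemma exact_ok: "\<bar>Arg (\<gamma> / \<gamma>)\<bar> \<le> pi / (real p)^2"
  by (cases "\<gamma> = 0") (auto simp: Arg_zero)

lemma T_ASM:
  assumes p: "prime p" and A: "A \<in> T_set p" and B: "B \<in> T_set p" and g: "\<gamma> \<in> spectrum_mat (A*B)"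
  shows "\<exists>\<alpha>\<in>spectrum_mat A. \<exists>\<beta>\<in>spectrum_mat B. \<bar>Arg (\<alpha>*\<beta>/\<gamma>)\<bar> \<le> pi / (real p)^2"
proof -
  have p0: "p > 0" using p by (simp add: prime_gt_0_nat)
  have p2: "p \<ge> 2" using p by (simp add: prime_ge_2_nat)
  obtain d k a where A': "A = T_elem p d k a" "\<forall>i<p. cmod (d i) = 1" "(\<Prod>i<p. d i) = 1" "k < p" "\<forall>j\<in>{1..p-1}. a j < p"
    using T_setD[OF A] by metis
  obtain d' k' a' where B': "B = T_elem p d' k' a'" "\<forall>i<p. cmod (d' i) = 1" "(\<Prod>i<p. d' i) = 1" "k' < p" "\<forall>j\<in>{1..p-1}. a' j < p"
    using T_setD[OF B] by metis
  define c where "c i = cT p d k a i * cT p d' k' a' (piT p k i)" for i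
  define \<pi> where "\<pi> = piT p (k+k')"
  have AB: "A * B = GP (2*p) c \<pi>"
    unfolding A'(1) B'(1) T_GP \<pi>_def by (subst GP_mult) (auto simp: piT_lt piT_comp c_def intro!: GP_eq)
  have exact: "?thesis" if "\<alpha> \<in> spectrum_mat A" "\<beta> \<in> spectrum_mat B" "\<alpha> * \<beta> = \<gamma>" for \<alpha> \<beta>
    using that exact_ok[of \<gamma> p] by metis
  from g obtain v where v: "v \<in> carrier_vec (2*p)" "v \<noteq> 0\<^sub>v (2*p)" "GP (2*p) c \<pi> *\<^sub>v v = \<gamma> \<cdot>\<^sub>v v"
    unfolding spectrum_mat_def AB eigenvalue_def eigenvector_def by auto
  obtain i where i: "i < 2*p" "v $ i \<noteq> 0"
  proof -
    have "\<exists>i<2*p. v $ i \<noteq> 0"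
    proof (rule ccontr)
      assume "\<not> ?thesis"
      hence "v = 0\<^sub>v (2*p)" using v(1) by (intro eq_vecI) auto
      thus False using v(2) by simp
    qed
    thus ?thesis using that by blast
  qed
  have pil: "\<forall>i<2*p. \<pi> i < 2*p" by (simp add: \<pi>_def piT_lt)
  have step: "\<gamma> * v $ i = c i * v $ (\<pi> i)" by (rule eig_step[OF pil v(1) v(3) i(1)])
  show ?thesis
  proof (cases "i < p")
    case False
    have pi: "\<pi> i = i" "piT p k i = i" using False by (auto simp: \<pi>_def piT_def)
    have "\<gamma> = c i" using step i(2) pi by simp
    hence "cT p d k a i * cT p d' k' a' i = \<gamma>" using pi by (simp add: c_def)
    moreover have "cT p d k a i \<in> spectrum_mat A" using H1[OF i(1)] False A'(1) by simp
    moreover have "cT p d' k' a' i \<in> spectrum_mat B" using H1[OF i(1)] False B'(1) by simp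
    ultimately show ?thesis using exact by blast
  next
    case True
    have ci: "c j = d j * d' ((j+k) mod p)" if "j < p" for j
    proof -
      have "(j+k) mod p < p" using p0 by simp
      thus ?thesis using that by (simp add: c_def cT_def piT_def)
    qed
    show ?thesis
    proof (cases "(k+k') mod p = 0")
      case True2: True
      have "\<pi> i = (i + (k+k') mod p) mod p" using True by (simp add: \<pi>_def piT_def mod_add_right_eq)
      hence pi: "\<pi> i = i" using True True2 by simp
      have \<gamma>: "\<gamma> = d i * d' ((i+k) mod p)" using step i(2) pi ci[OF True] by simp
      show ?thesis
      proof (cases "k = 0")
        case k0: True
        hence k'0: "k' = 0" using True2 B'(4) by simp
        have "d i \<in> spectrum_mat A" using H1'[OF True] A'(1) k0 by simp
        moreover have "d' i \<in> spectrum_mat B" using H1'[OF True] B'(1) k'0 by simp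
        moreover have "d i * d' i = \<gamma>" using \<gamma> k0 True by simp
        ultimately show ?thesis using exact by blast
      next
        case k0: False
        have k'0: "k' \<noteq> 0" using k0 True2 A'(4) by (metis add_0_right mod_less)
        have "(i+k) mod p < p" using p0 by simp
        hence "cmod \<gamma> = 1" using \<gamma> A'(2) B'(2) True by (simp add: norm_mult)
        then obtain m where m: "\<bar>Arg (xi p ^ m / \<gamma>)\<bar> \<le> pi / (real p)^2" using round_lemma[OF p2] by blast
        obtain \<alpha> \<beta> where ab: "\<alpha> \<in> spectrum_mat (T_elem p d k a)" "\<beta> \<in> spectrum_mat (T_elem p d' k' a')" "\<alpha> * \<beta> = xi p ^ m"
          using decomp[OF p _ A'(4) A'(3) _ B'(4) B'(3), of a a' m] k0 k'0 by blast
        show ?thesis using ab m A'(1) B'(1) by metis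
      qed
    next
      case False2: False
      have it: "\<gamma>^p * v $ i = (\<Prod>s<p. c ((\<pi>^^s) i)) * v $ ((\<pi>^^p) i)"
        by (rule eig_iter[OF pil v(1) v(3) i(1)])
      have pis: "(\<pi>^^s) i = (i + s*(k+k')) mod p" for s
        unfolding \<pi>_def by (rule piT_pow[OF True])
      have "(\<pi>^^p) i = i" using True by (simp add: pis)
      moreover have "(\<Prod>s<p. c ((\<pi>^^s) i)) = 1"
      proof -
        have "(\<Prod>s<p. c ((\<pi>^^s) i)) = (\<Prod>s<p. c ((i + s*(k+k')) mod p))" by (simp add: pis)
        also have "\<dots> = (\<Prod>j<p. c j)" by (rule shift_prod[OF p False2 True])
        also have "\<dots> = (\<Prod>j<p. d j * d' ((j+k) mod p))" by (rule prod.cong) (simp_all add: ci)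
        also have "\<dots> = (\<Prod>j<p. d j) * (\<Prod>j<p. d' ((j+k) mod p))" by (rule prod.distrib)
        also have "\<dots> = 1" using A'(3) B'(3) rot_prod[OF p, of d' k] by simp
        finally show ?thesis .
      qed
      ultimately have gp: "\<gamma>^p = 1" using it i(2) by simp
      show ?thesis
      proof (cases "k = 0")
        case k0: True
        hence "0 < k'" using False2 B'(4) by (cases k') auto
        hence "\<gamma> \<in> spectrum_mat B" using H2[OF p _ B'(4) B'(3) gp] B'(1) by simp
        moreover have "1 \<in> spectrum_mat A" using H3[OF p0] A'(1) by simp
        ultimately show ?thesis using exact[of 1 \<gamma>] by simp
      next
        case k0: False
        hence "\<gamma> \<in> spectrum_mat A" using H2[OF p _ A'(4) A'(3) gp] A'(1) by simp
        moreover have "1 \<in> spectrum_mat B" using H3[OF p0] B'(1) by simp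
        ultimately show ?thesis using exact[of \<gamma> 1] by simp
      qed
    qed
  qed
qed

theorem theorem5:
  fixes p :: nat
  assumes "prime p" and "odd p"
  shows "is_mat_group (2 * p) (T_set p) \<and> (\<forall>A\<in>T_set p. unitary_mat (2 * p) A)
         \<and> eps_ASM (1 / (2 * real p ^ 2)) (T_set p)"
proof (intro conjI)
  have p: "prime p" by fact
  have p0: "p > 0" using p by (simp add: prime_gt_0_nat)
  show "is_mat_group (2 * p) (T_set p)"
    unfolding is_mat_group_def
  proof (intro conjI ballI)
    show "T_set p \<subseteq> carrier_mat (2*p) (2*p)"
      by (auto simp: T_set_def T_GP)
    have "1\<^sub>m (2*p) = T_elem p (\<lambda>_. 1) 0 (\<lambda>_. 0)"
      unfolding T_GP one_GP by (rule GP_eq) (auto simp: cT_def eT_def piT_def)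
    moreover have "T_elem p (\<lambda>_. 1) 0 (\<lambda>_. 0) \<in> T_set p" by (rule T_setI) (auto simp: p0)
    ultimately show "1\<^sub>m (2*p) \<in> T_set p" by simp
    fix A assume A: "A \<in> T_set p"
    show "\<exists>B\<in>T_set p. A * B = 1\<^sub>m (2 * p) \<and> B * A = 1\<^sub>m (2 * p)" by (rule T_inv[OF p A])
  next
    fix A B assume "A \<in> T_set p" "B \<in> T_set p"
    thus "A * B \<in> T_set p" by (rule T_closed[OF p])
  qed
  show "\<forall>A\<in>T_set p. unitary_mat (2 * p) A"
  proof
    fix A assume A: "A \<in> T_set p"
    obtain d k a where A': "A = T_elem p d k a" "\<forall>i<p. cmod (d i) = 1" "(\<Prod>i<p. d i) = 1" "k < p" "\<forall>j\<in>{1..p-1}. a j < p"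
      using T_setD[OF A] by metis
    have "\<forall>i<2*p. cmod (cT p d k a i) = 1" using A'(2) by (auto simp: cT_def eT_def)
    thus "unitary_mat (2 * p) A" unfolding A'(1) T_GP
      by (intro GP_unitary) (auto simp: piT_lt piT_inj)
  qed
  show "eps_ASM (1 / (2 * real p ^ 2)) (T_set p)"
    unfolding eps_ASM_def
  proof (intro ballI)
    fix A B \<gamma> assume A: "A \<in> T_set p" and B: "B \<in> T_set p" and g: "\<gamma> \<in> spectrum_mat (A * B)"
    obtain \<alpha> \<beta> where ab: "\<alpha> \<in> spectrum_mat A" "\<beta> \<in> spectrum_mat B" "\<bar>Arg (\<alpha>*\<beta>/\<gamma>)\<bar> \<le> pi / (real p)^2"
      using T_ASM[OF p A B g] by blast
    have "\<bar>Arg (\<alpha>*\<beta>/\<gamma>)\<bar> / (2*pi) \<le> (pi / (real p)^2) / (2*pi)"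
      using ab(3) by (intro divide_right_mono) auto
    also have "\<dots> = 1 / (2 * real p ^ 2)" by (simp add: field_simps)
    finally show "\<exists>\<alpha>\<in>spectrum_mat A. \<exists>\<beta>\<in>spectrum_mat B. \<bar>Arg (\<alpha> * \<beta> / \<gamma>)\<bar> / (2 * pi) \<le> 1 / (2 * real p ^ 2)"
      using ab by blast
  qed
qed

end
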